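(* Let $d\ge 2$, let $\bm{k}_1,\ldots,\bm{k}_d\in\mathbb{R}^d$ be a basis of $\mathbb{R}^d$ with $\mathsf{K}=[\bm{k}_1,\ldots,\bm{k}_d]$, and let $\mathfrak{a},\mathfrak{b}\in\mathbb{R}$. For $\bm{u}=[\alpha_1,\ldots,\alpha_d,\beta_1,\ldots,\beta_d]^T\in\mathbb{C}^{2d}$ and $\bm{x}\in\mathbb{R}^d$ let $p(\bm{x};\bm{u})=\sum_{j=1}^d\alpha_j e^{i\bm{k}_j\cdot\bm{x}}+\beta_j e^{-i\bm{k}_j\cdot\bm{x}}$, $\psi(\bm{x};\bm{u})=\mathfrak{a}|p(\bm{x};\bm{u})|^2-\mathfrak{b}|\nabla_{\bm{x}}p(\bm{x};\bm{u})|^2$, and let $\mathsf{Q}(\bm{0})$ be the Hermitian matrix with $\psi(\bm{0};\bm{u})=\bm{u}^*\mathsf{Q}(\bm{0})\bm{u}$. Fix a sign $\pm$ (with $\mp$ denoting the opposite sign), and let $\bm{u}=[\bm{v};\pm\bm{v}]$, $\bm{v}\in\mathbb{R}^d$, be a real unit-norm eigenvector of $\mathsf{Q}(\bm{0})$ with eigenvalue $\lambda$. Let $R^\pm_{\lambda,\bm{u}}$ be the set of pairs $(\bm{s},\bm{r})\in\{0,1\}^d\times\{0,1\}^d$ such that the three vectors $$[(-1)^{\bm{s}}\odot\bm{v};\mp(-1)^{\bm{s}}\odot\bm{v}],\quad [(-1)^{\bm{r}}\odot\bm{v};\mp(-1)^{\bm{r}}\odot\bm{v}],\quad [(-1)^{\bm{s}+\bm{r}}\odot\bm{v};\pm(-1)^{\bm{s}+\bm{r}}\odot\bm{v}]$$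 all lie in the $\lambda$-eigenspace of $\mathsf{Q}(\bm{0})$. Then for every $\bm{n}\in\mathbb{Z}^d$ and every $(\bm{s},\bm{r})\in R^\pm_{\lambda,\bm{u}}$, the set $L_{\lambda,\bm{u}}=\{\bm{x}\in\mathbb{R}^d:\psi(\bm{x};\bm{u})=\lambda\}$ contains $$\{\mathsf{K}^{-T}(\theta(-1)^{\bm{s}}+\phi(-1)^{\bm{r}}+2\pi\bm{n}):\theta,\phi\in\mathbb{R}\}.$$ Moreover, this set is a plane whenever $(-1)^{\bm{s}}$ and $(-1)^{\bm{r}}$ are linearly independent, equivalently whenever $(-1)^{\bm{s}+\bm{r}}\notin\{-\bm{1},\bm{1}\}$.
   Context: $[\bm{x};\bm{y}]$ denotes the vertical stacking of vectors $\bm{x},\bm{y}$. For $\bm{s}\in\{0,1\}^d$ (or $\bm{s}\in\{0,1,2\}^d$ for sums), $(-1)^{\bm{s}}=[(-1)^{s_1},\ldots,(-1)^{s_d}]$; $\bm{1}$ is the all-ones vector in $\mathbb{R}^d$; and $\odot$ is the componentwise (Hadamard) product. *)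

theory Defs
  imports "HOL-Analysis.Analysis"
begin

text \<open>Coefficients of u = [alpha_1..alpha_d, beta_1..beta_d] in C^{2d}; index Inl j is alpha_j, Inr j is beta_j.
  The wave vectors k_j are the columns of K.\<close>

definition pfun :: "real^'d^'d \<Rightarrow> complex^('d + 'd) \<Rightarrow> real^'d \<Rightarrow> complex" where
  "pfun K u x = (\<Sum>j\<in>UNIV. u $ Inl j * exp (\<i> * complex_of_real (column j K \<bullet> x))
                         + u $ Inr j * exp (- \<i> * complex_of_real (column j K \<bullet> x)))"

definition grad_sq :: "real^'d^'d \<Rightarrow> complex^('d + 'd) \<Rightarrow> real^'d \<Rightarrow> real" where
  "grad_sq K u x = (\<Sum>m\<in>UNIV.
      (cmod (vector_derivative (\<lambda>t. pfun K u (x + t *\<^sub>R axis m 1)) (at 0))) ^ 2)"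

definition psi :: "real \<Rightarrow> real \<Rightarrow> real^'d^'d \<Rightarrow> complex^('d + 'd) \<Rightarrow> real^'d \<Rightarrow> real" where
  "psi a b K u x = a * (cmod (pfun K u x)) ^ 2 - b * grad_sq K u x"

definition hermitian_mat :: "complex^'n^'n \<Rightarrow> bool" where
  "hermitian_mat Q \<longleftrightarrow> (\<forall>i j. Q $ i $ j = cnj (Q $ j $ i))"

definition quad_form :: "complex^'n \<Rightarrow> complex^'n^'n \<Rightarrow> complex" where
  "quad_form u Q = (\<Sum>i\<in>UNIV. \<Sum>j\<in>UNIV. cnj (u $ i) * Q $ i $ j * u $ j)"

text \<open>(-1)^s componentwise, for s with entries in {0,1} (or {0,1,2} for sums).\<close>
definition sgnvec :: "('d \<Rightarrow> nat) \<Rightarrow> real^'d" where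
  "sgnvec s = (\<chi> j. (-1) ^ s j)"

definition stack :: "real \<Rightarrow> real^'d \<Rightarrow> complex^('d + 'd)" where
  "stack c w = (\<chi> i. case i of Inl j \<Rightarrow> complex_of_real (w $ j) | Inr j \<Rightarrow> complex_of_real (c * w $ j))"

definition eigvec_of :: "complex^'n^'n \<Rightarrow> real \<Rightarrow> complex^'n \<Rightarrow> bool" where
  "eigvec_of Q lam w \<longleftrightarrow> Q *v w = lam *\<^sub>R w"

end

theory Submission
  imports Defs
begin
definition shiftu :: "real^'d^'d \<Rightarrow> real^'d \<Rightarrow> complex^('d + 'd) \<Rightarrow> complex^('d + 'd)" where
  "shiftu K x u = (\<chi> i. case i of Inl j \<Rightarrow> u $ i * exp (\<i> * complex_of_real (column j K \<bullet> x))
                              | Inr j \<Rightarrow> u $ i * exp (- \<i> * complex_of_real (column j K \<bullet> x)))"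

lemma pfun_shift: "pfun K u (x + z) = pfun K (shiftu K x u) z"
  unfolding pfun_def shiftu_def
proof (intro sum.cong refl)
  fix j
  have e1: "exp (\<i> * complex_of_real (column j K \<bullet> (x + z))) = exp (\<i> * complex_of_real (column j K \<bullet> x)) * exp (\<i> * complex_of_real (column j K \<bullet> z))"
    by (simp add: inner_add_right exp_add[symmetric] algebra_simps)
  have e2: "exp (- \<i> * complex_of_real (column j K \<bullet> (x + z))) = exp (- \<i> * complex_of_real (column j K \<bullet> x)) * exp (- \<i> * complex_of_real (column j K \<bullet> z))"
    by (simp add: inner_add_right exp_add[symmetric] algebra_simps)
  show "u $ Inl j * exp (\<i> * complex_of_real (column j K \<bullet> (x + z))) + u $ Inr j * exp (- \<i> * complex_of_real (column j K \<bullet> (x + z))) =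
    (\<chi> i. case i of Inl j \<Rightarrow> u $ i * exp (\<i> * complex_of_real (column j K \<bullet> x))
                              | Inr j \<Rightarrow> u $ i * exp (- \<i> * complex_of_real (column j K \<bullet> x))) $ Inl j * exp (\<i> * complex_of_real (column j K \<bullet> z)) +
    (\<chi> i. case i of Inl j \<Rightarrow> u $ i * exp (\<i> * complex_of_real (column j K \<bullet> x))
                              | Inr j \<Rightarrow> u $ i * exp (- \<i> * complex_of_real (column j K \<bullet> x))) $ Inr j * exp (- \<i> * complex_of_real (column j K \<bullet> z))"
    unfolding e1 e2 by (simp add: mult.assoc)
qed

lemma psi_shift: "psi a b K u x = psi a b K (shiftu K x u) 0"
proof -
  have e: "\<And>z. pfun K u (x + z) = pfun K (shiftu K x u) (0 + z)" by (simp add: pfun_shift)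
  have e0: "pfun K u x = pfun K (shiftu K x u) 0" using pfun_shift[of K u x 0] by simp
  show ?thesis by (simp only: psi_def grad_sq_def e e0)
qed

lemma norm_shift: "norm (shiftu K x u) = norm u"
  unfolding norm_vec_def shiftu_def
  by (intro arg_cong[where f="\<lambda>f. L2_set f UNIV"] ext) (auto split: sum.splits simp: norm_mult)

lemma norm_sq_sum: "(norm (u::complex^'n))^2 = (\<Sum>i\<in>UNIV. (cmod (u $ i))^2)"
  unfolding norm_vec_def L2_set_def by (simp add: sum_nonneg)

lemma eig_comp: "eigvec_of Q lam w \<longleftrightarrow> (\<forall>i. (\<Sum>j\<in>UNIV. Q $ i $ j * w $ j) = complex_of_real lam * w $ i)"
  unfolding eigvec_of_def vec_eq_iff matrix_vector_mult_def vector_scaleR_component by (simp add: scaleR_conv_of_real)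

lemma eig_add: "eigvec_of Q lam w1 \<Longrightarrow> eigvec_of Q lam w2 \<Longrightarrow> eigvec_of Q lam (\<chi> i. w1 $ i + w2 $ i)"
  unfolding eig_comp by (simp add: distrib_left sum.distrib)

lemma eig_smult: "eigvec_of Q lam w \<Longrightarrow> eigvec_of Q lam (\<chi> i. c * w $ i)"
  unfolding eig_comp
proof (intro allI)
  fix i assume h: "\<forall>i. (\<Sum>j\<in>UNIV. Q $ i $ j * w $ j) = complex_of_real lam * w $ i"
  have "(\<Sum>j\<in>UNIV. Q $ i $ j * ((\<chi> i. c * w $ i) $ j)) = c * (\<Sum>j\<in>UNIV. Q $ i $ j * w $ j)"
    by (simp add: sum_distrib_left algebra_simps)
  then show "(\<Sum>j\<in>UNIV. Q $ i $ j * ((\<chi> i. c * w $ i) $ j)) = complex_of_real lam * (\<chi> i. c * w $ i) $ i"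
    using h by simp
qed

lemma quad_eig: "eigvec_of Q lam w \<Longrightarrow> quad_form w Q = complex_of_real (lam * (norm w)^2)"
proof -
  assume "eigvec_of Q lam w"
  then have h: "\<And>i. (\<Sum>j\<in>UNIV. Q $ i $ j * w $ j) = complex_of_real lam * w $ i" unfolding eig_comp by blast
  have "quad_form w Q = (\<Sum>i\<in>UNIV. cnj (w $ i) * (\<Sum>j\<in>UNIV. Q $ i $ j * w $ j))"
    unfolding quad_form_def by (simp add: sum_distrib_left mult.assoc)
  also have "\<dots> = (\<Sum>i\<in>UNIV. complex_of_real lam * complex_of_real ((cmod (w $ i))^2))"
  proof (intro sum.cong refl)
    fix i
    have "cnj (w $ i) * (complex_of_real lam * w $ i) = complex_of_real lam * (w $ i * cnj (w $ i))" by (simp add: mult_ac)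
    then show "cnj (w $ i) * (\<Sum>j\<in>UNIV. Q $ i $ j * w $ j) = complex_of_real lam * complex_of_real ((cmod (w $ i))^2)"
      by (simp only: h complex_norm_square)
  qed
  also have "\<dots> = complex_of_real (lam * (norm w)^2)"
    unfolding norm_sq_sum of_real_mult of_real_sum sum_distrib_left ..
  finally show ?thesis .
qed

lemma exp_sign: "(s'::real)^2 = 1 \<Longrightarrow> exp (\<i> * complex_of_real (t * s')) = complex_of_real (cos t) + \<i> * complex_of_real (s' * sin t)"
proof -
  assume "s'^2 = 1"
  then have "s' = 1 \<or> s' = -1" by (metis power2_eq_1_iff)
  moreover have "exp (- (\<i> * complex_of_real t)) = cis (-t)" by (simp add: cis_conv_exp)
  ultimately show ?thesis
    by (auto simp: cis_conv_exp[symmetric] complex_eq_iff)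
qed

lemma exp_three: "(s'::real)^2 = 1 \<Longrightarrow> (r'::real)^2 = 1 \<Longrightarrow>
  exp (\<i> * complex_of_real (t * s' + p * r' + 2 * pi * of_int n)) =
   (complex_of_real (cos t) + \<i> * complex_of_real (s' * sin t)) * (complex_of_real (cos p) + \<i> * complex_of_real (r' * sin p))"
proof -
  assume a: "s'^2 = 1" "r'^2 = 1"
  have "exp (\<i> * complex_of_real (t * s' + p * r' + 2 * pi * of_int n)) =
     exp (\<i> * complex_of_real (t * s')) * exp (\<i> * complex_of_real (p * r')) * exp (\<i> * complex_of_real (2 * pi * of_int n))"
    by (simp add: distrib_left exp_add)
  also have "exp (\<i> * complex_of_real (2 * pi * of_int n)) = 1"
    using cis_multiple_2pi[of "of_int n"] by (simp add: cis_conv_exp)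
  finally show ?thesis using exp_sign[OF a(1)] exp_sign[OF a(2)] by simp
qed

lemma inv_facts: assumes "invertible (K::real^'d^'d)"
  shows "K ** matrix_inv K = mat 1 \<and> matrix_inv K ** K = mat 1"
  using assms unfolding invertible_def matrix_inv_def by (rule someI_ex)

lemma transp_inv: assumes "invertible (K::real^'d^'d)"
  shows "transpose K *v (transpose (matrix_inv K) *v w) = w"
proof -
  have "transpose K ** transpose (matrix_inv K) = mat 1"
    using inv_facts[OF assms] by (metis matrix_transpose_mul transpose_mat)
  then show ?thesis by (metis matrix_vector_mul_assoc matrix_vector_mul_lid)
qed

lemma col_inner: "column j K \<bullet> x = (transpose K *v x) $ j"
  by (simp add: inner_vec_def column_def transpose_def matrix_vector_mult_def mult.commute)

lemma sgn_sq: "(sgnvec s $ j)^2 = 1"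
  by (simp add: sgnvec_def power_mult[symmetric] mult.commute[of _ 2] power_mult)

lemma sgn_add: "sgnvec (\<lambda>j. s j + r j) = sgnvec s * sgnvec r"
  by (simp add: sgnvec_def times_vec_def vec_eq_iff power_add)

lemma shift_decomp:
  fixes \<theta> \<phi> :: real and s r :: "'d::finite \<Rightarrow> nat" and n :: "'d \<Rightarrow> int"
  assumes K: "invertible (K::real^'d^'d)"
  defines "x \<equiv> transpose (matrix_inv K) *v (\<theta> *\<^sub>R sgnvec s + \<phi> *\<^sub>R sgnvec r + (2 * pi) *\<^sub>R (\<chi> j. real_of_int (n j)))"
  shows "shiftu K x (stack \<sigma> v) = (\<chi> i. complex_of_real (cos \<theta> * cos \<phi>) * stack \<sigma> v $ i
      + (\<i> * complex_of_real (sin \<theta> * cos \<phi>)) * stack (-\<sigma>) (sgnvec s * v) $ i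
      + (\<i> * complex_of_real (cos \<theta> * sin \<phi>)) * stack (-\<sigma>) (sgnvec r * v) $ i
      + complex_of_real (- (sin \<theta> * sin \<phi>)) * stack \<sigma> (sgnvec (\<lambda>j. s j + r j) * v) $ i)"
proof -
  have y: "column j K \<bullet> x = \<theta> * sgnvec s $ j + \<phi> * sgnvec r $ j + 2 * pi * of_int (n j)" for j
    unfolding col_inner x_def transp_inv[OF K] by simp
  have e1: "exp (\<i> * complex_of_real (column j K \<bullet> x)) =
     (complex_of_real (cos \<theta>) + \<i> * complex_of_real (sgnvec s $ j * sin \<theta>)) * (complex_of_real (cos \<phi>) + \<i> * complex_of_real (sgnvec r $ j * sin \<phi>))" for j
    unfolding y by (rule exp_three[OF sgn_sq sgn_sq])
  have e2: "exp (- (\<i> * complex_of_real (column j K \<bullet> x))) =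
     (complex_of_real (cos \<theta>) + \<i> * complex_of_real (- sgnvec s $ j * sin \<theta>)) * (complex_of_real (cos \<phi>) + \<i> * complex_of_real (- sgnvec r $ j * sin \<phi>))" for j
  proof -
    have h: "- (\<i> * complex_of_real (column j K \<bullet> x)) = \<i> * complex_of_real (\<theta> * (- sgnvec s $ j) + \<phi> * (- sgnvec r $ j) + 2 * pi * of_int (- n j))"
      unfolding y by (simp add: algebra_simps)
    have a: "(- sgnvec s $ j)^2 = 1" "(- sgnvec r $ j)^2 = 1" using sgn_sq by simp_all
    show ?thesis unfolding h exp_three[OF a] by simp
  qed
  show ?thesis
    apply (subst vec_eq_iff)
    apply (intro allI)
    subgoal for i
      by (cases i) (simp_all add: shiftu_def e1 e2 stack_def sgn_add times_vec_def complex_eq_iff algebra_simps)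
    done
qed

lemma on_level:
  fixes \<theta> \<phi> :: real and s r :: "'d::finite \<Rightarrow> nat" and n :: "'d \<Rightarrow> int" and K :: "real^'d^'d"
  assumes K: "invertible K"
    and Qrep: "\<forall>u. complex_of_real (psi a b K u 0) = quad_form u Q"
    and unit: "norm (stack \<sigma> v) = 1"
    and e0: "eigvec_of Q lam (stack \<sigma> v)"
    and e1: "eigvec_of Q lam (stack (-\<sigma>) (sgnvec s * v))"
    and e2: "eigvec_of Q lam (stack (-\<sigma>) (sgnvec r * v))"
    and e3: "eigvec_of Q lam (stack \<sigma> (sgnvec (\<lambda>j. s j + r j) * v))"
  shows "psi a b K (stack \<sigma> v) (transpose (matrix_inv K) *v (\<theta> *\<^sub>R sgnvec s + \<phi> *\<^sub>R sgnvec r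
                 + (2 * pi) *\<^sub>R (\<chi> j. real_of_int (n j)))) = lam"
proof -
  define x where "x = transpose (matrix_inv K) *v (\<theta> *\<^sub>R sgnvec s + \<phi> *\<^sub>R sgnvec r
                 + (2 * pi) *\<^sub>R (\<chi> j. real_of_int (n j)))"
  define u' where "u' = shiftu K x (stack \<sigma> v)"
  have "eigvec_of Q lam (\<chi> i. (\<chi> i. (\<chi> i. (\<chi> i. complex_of_real (cos \<theta> * cos \<phi>) * stack \<sigma> v $ i) $ i
      + (\<chi> i. (\<i> * complex_of_real (sin \<theta> * cos \<phi>)) * stack (-\<sigma>) (sgnvec s * v) $ i) $ i) $ i
      + (\<chi> i. (\<i> * complex_of_real (cos \<theta> * sin \<phi>)) * stack (-\<sigma>) (sgnvec r * v) $ i) $ i) $ i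
      + (\<chi> i. complex_of_real (- (sin \<theta> * sin \<phi>)) * stack \<sigma> (sgnvec (\<lambda>j. s j + r j) * v) $ i) $ i)"
    by (intro eig_add eig_smult e0 e1 e2 e3)
  then have eu: "eigvec_of Q lam u'"
    unfolding u'_def x_def shift_decomp[OF K] by simp
  have nu: "norm u' = 1" unfolding u'_def norm_shift unit ..
  have "complex_of_real (psi a b K u' 0) = complex_of_real lam"
    using Qrep quad_eig[OF eu] nu by simp
  then have "psi a b K u' 0 = lam" by simp
  then show ?thesis unfolding x_def[symmetric] psi_shift[of a b K _ x] u'_def .
qed

lemma indep_iff:
  fixes a b :: "real^'d"
  assumes a: "\<And>j. (a $ j)^2 = 1" and b: "\<And>j. (b $ j)^2 = 1"
  shows "(\<forall>c1 c2. c1 *\<^sub>R a + c2 *\<^sub>R b = 0 \<longrightarrow> c1 = 0 \<and> c2 = 0) \<longleftrightarrow> a * b \<notin> {vec (-1), vec 1}"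
proof
  assume ind: "\<forall>c1 c2. c1 *\<^sub>R a + c2 *\<^sub>R b = 0 \<longrightarrow> c1 = 0 \<and> c2 = 0"
  show "a * b \<notin> {vec (-1), vec 1}"
  proof
    assume "a * b \<in> {vec (-1), vec 1}"
    then have "\<exists>k. (k = 1 \<or> k = -1) \<and> (\<forall>j. a $ j * b $ j = k)"
      by (auto simp: vec_eq_iff times_vec_def)
    then obtain k where k: "k = 1 \<or> k = -1" "\<And>j. a $ j * b $ j = k" by blast
    have "\<And>j. b $ j = k * a $ j"
    proof -
      fix j
      have aa: "a $ j * a $ j = 1" using a[of j] by (simp add: power2_eq_square)
      have "b $ j = (a $ j * a $ j) * b $ j" using aa by simp
      also have "\<dots> = a $ j * (a $ j * b $ j)" by (simp only: mult.assoc)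
      also have "\<dots> = a $ j * k" using k(2) by simp
      finally show "b $ j = k * a $ j" by (simp only: mult.commute)
    qed
    then have "k *\<^sub>R a + (-1) *\<^sub>R b = 0" by (simp add: vec_eq_iff)
    then have "k = 0 \<and> (-1::real) = 0" using ind by blast
    then show False by simp
  qed
next
  assume nb: "a * b \<notin> {vec (-1), vec 1}"
  show "\<forall>c1 c2. c1 *\<^sub>R a + c2 *\<^sub>R b = 0 \<longrightarrow> c1 = 0 \<and> c2 = 0"
  proof (intro allI impI)
    fix c1 c2 assume h: "c1 *\<^sub>R a + c2 *\<^sub>R b = 0"
    then have hj: "\<And>j. c1 * a $ j + c2 * b $ j = 0" by (simp add: vec_eq_iff)
    have hj2: "\<And>j. c1 + c2 * (a $ j * b $ j) = 0"
    proof -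
      fix j
      have aa: "a $ j * a $ j = 1" using a[of j] by (simp add: power2_eq_square)
      have "a $ j * (c1 * a $ j + c2 * b $ j) = c1 * (a $ j * a $ j) + c2 * (a $ j * b $ j)" by (simp add: algebra_simps)
      then show "c1 + c2 * (a $ j * b $ j) = 0" using hj[of j] aa by simp
    qed
    show "c1 = 0 \<and> c2 = 0"
    proof (cases "c2 = 0")
      case True
      then show ?thesis using hj2 by simp
    next
      case False
      define k where "k = - c1 / c2"
      have kj: "a $ j * b $ j = k" for j
      proof -
        have eq: "c2 * (a $ j * b $ j) = - c1" using hj2[of j] by linarith
        have "a $ j * b $ j = (c2 * (a $ j * b $ j)) / c2" using False by simp
        also have "\<dots> = - c1 / c2" by (simp only: eq)
        finally show ?thesis unfolding k_def .
      qed
      have sq: "(a $ j * b $ j)^2 = 1" for j using a[of j] b[of j] by (simp add: power_mult_distrib)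
      have "k^2 = 1" using sq[of undefined] kj[of undefined] by simp
      then have "k = 1 \<or> k = -1" by (simp add: power2_eq_1_iff)
      moreover have "a * b = vec k" using kj by (simp add: vec_eq_iff times_vec_def)
      ultimately show ?thesis using nb by auto
    qed
  qed
qed
lemma plane:
  fixes T :: "real^'d^'d" and a b c :: "real^'d"
  assumes inj: "\<And>z. T *v z = 0 \<Longrightarrow> z = 0"
    and ind: "\<forall>c1 c2. c1 *\<^sub>R a + c2 *\<^sub>R b = 0 \<longrightarrow> c1 = 0 \<and> c2 = 0"
  shows "let S = {T *v (\<theta> *\<^sub>R a + \<phi> *\<^sub>R b + c) | \<theta> \<phi>. True} in affine S \<and> aff_dim S = 2"
proof -
  define S where "S = {T *v (\<theta> *\<^sub>R a + \<phi> *\<^sub>R b + c) | \<theta> \<phi>. True}"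
  have Seq: "S = (+) (T *v c) ` span {T *v a, T *v b}"
  proof
    show "S \<subseteq> (+) (T *v c) ` span {T *v a, T *v b}"
    proof
      fix x assume "x \<in> S"
      then obtain \<theta> \<phi> where x: "x = T *v (\<theta> *\<^sub>R a + \<phi> *\<^sub>R b + c)" unfolding S_def by blast
      have "\<theta> *\<^sub>R (T *v a) + \<phi> *\<^sub>R (T *v b) \<in> span {T *v a, T *v b}"
        by (intro span_add span_scale span_base) auto
      moreover have "x = T *v c + (\<theta> *\<^sub>R (T *v a) + \<phi> *\<^sub>R (T *v b))"
        unfolding x by (simp add: matrix_vector_right_distrib matrix_vector_mult_scaleR algebra_simps)
      ultimately show "x \<in> (+) (T *v c) ` span {T *v a, T *v b}" by blast
    qed
  next
    show "(+) (T *v c) ` span {T *v a, T *v b} \<subseteq> S"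
    proof
      fix x assume "x \<in> (+) (T *v c) ` span {T *v a, T *v b}"
      then obtain y where y: "y \<in> span {T *v a, T *v b}" "x = T *v c + y" by blast
      from y(1) obtain k m where "y - k *\<^sub>R (T *v a) = m *\<^sub>R (T *v b)"
        unfolding span_insert span_singleton by auto
      then have "y = k *\<^sub>R (T *v a) + m *\<^sub>R (T *v b)" by (simp add: algebra_simps)
      then have "x = T *v (k *\<^sub>R a + m *\<^sub>R b + c)"
        using y(2) by (simp add: matrix_vector_right_distrib matrix_vector_mult_scaleR algebra_simps)
      then show "x \<in> S" unfolding S_def by blast
    qed
  qed
  have bnz: "T *v b \<noteq> 0"
  proof
    assume "T *v b = 0"
    then have "b = 0" by (rule inj)
    then have "0 *\<^sub>R a + 1 *\<^sub>R b = 0" by simp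
    then show False using ind by force
  qed
  have anot: "T *v a \<notin> span {T *v b}"
  proof
    assume "T *v a \<in> span {T *v b}"
    then obtain k where "T *v a = k *\<^sub>R (T *v b)" unfolding span_singleton by auto
    then have "T *v (a - k *\<^sub>R b) = 0" by (simp add: matrix_vector_mult_diff_distrib matrix_vector_mult_scaleR)
    then have "a - k *\<^sub>R b = 0" by (rule inj)
    then have "1 *\<^sub>R a + (- k) *\<^sub>R b = 0" by simp
    then have "(1::real) = 0 \<and> - k = 0" using ind by blast
    then show False by simp
  qed
  have "affine S" unfolding Seq
    using affine_translation subspace_imp_affine[OF subspace_span] by blast
  moreover have "aff_dim S = 2" unfolding Seq aff_dim_translation_eq aff_dim_subspace[OF subspace_span] dim_span
    using anot bnz by (simp add: dim_insert)
  ultimately show ?thesis unfolding S_def Let_def by blast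
qed

theorem lemma2p9:
  fixes K :: "real^'d^'d" and a b lam \<sigma> :: real
    and Q :: "complex^('d + 'd)^('d + 'd)" and v :: "real^'d"
  assumes d2: "CARD('d) \<ge> 2"
    and basis: "invertible K"
    and herm: "hermitian_mat Q"
    and Qrep: "\<forall>u. complex_of_real (psi a b K u 0) = quad_form u Q"
    and sign: "\<sigma> = 1 \<or> \<sigma> = -1"
    and unit: "norm (stack \<sigma> v) = 1"
    and eig: "eigvec_of Q lam (stack \<sigma> v)"
  shows "\<forall>s r. ((\<forall>j. s j \<le> 1) \<and> (\<forall>j. r j \<le> 1)
              \<and> eigvec_of Q lam (stack (-\<sigma>) (sgnvec s * v))
              \<and> eigvec_of Q lam (stack (-\<sigma>) (sgnvec r * v))
              \<and> eigvec_of Q lam (stack \<sigma> (sgnvec (\<lambda>j. s j + r j) * v)))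
     \<longrightarrow> (\<forall>n :: 'd \<Rightarrow> int.
            {transpose (matrix_inv K) *v (\<theta> *\<^sub>R sgnvec s + \<phi> *\<^sub>R sgnvec r
                 + (2 * pi) *\<^sub>R (\<chi> j. real_of_int (n j))) | \<theta> \<phi>. True}
              \<subseteq> {x. psi a b K (stack \<sigma> v) x = lam}
          \<and> ((\<forall>c1 c2. c1 *\<^sub>R sgnvec s + c2 *\<^sub>R sgnvec r = 0 \<longrightarrow> c1 = 0 \<and> c2 = 0) \<longrightarrow>
               (let S = {transpose (matrix_inv K) *v (\<theta> *\<^sub>R sgnvec s + \<phi> *\<^sub>R sgnvec r
                          + (2 * pi) *\<^sub>R (\<chi> j. real_of_int (n j))) | \<theta> \<phi>. True}
                in affine S \<and> aff_dim S = 2)))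
        \<and> ((\<forall>c1 c2. c1 *\<^sub>R sgnvec s + c2 *\<^sub>R sgnvec r = 0 \<longrightarrow> c1 = 0 \<and> c2 = 0)
             \<longleftrightarrow> sgnvec (\<lambda>j. s j + r j) \<notin> {vec (-1), vec 1})"
proof (intro allI impI)
  fix s r :: "'d \<Rightarrow> nat"
  assume H: "(\<forall>j. s j \<le> 1) \<and> (\<forall>j. r j \<le> 1)
              \<and> eigvec_of Q lam (stack (-\<sigma>) (sgnvec s * v))
              \<and> eigvec_of Q lam (stack (-\<sigma>) (sgnvec r * v))
              \<and> eigvec_of Q lam (stack \<sigma> (sgnvec (\<lambda>j. s j + r j) * v))"
  have Tinj: "z = 0" if "transpose (matrix_inv K) *v z = 0" for z
  proof -
    have "z = transpose K *v (transpose (matrix_inv K) *v z)" by (simp only: transp_inv[OF basis])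
    also have "\<dots> = 0" using that by simp
    finally show ?thesis .
  qed
  have iff: "(\<forall>c1 c2. c1 *\<^sub>R sgnvec s + c2 *\<^sub>R sgnvec r = 0 \<longrightarrow> c1 = 0 \<and> c2 = 0)
             \<longleftrightarrow> sgnvec (\<lambda>j. s j + r j) \<notin> {vec (-1), vec 1}"
    unfolding sgn_add by (rule indep_iff[OF sgn_sq sgn_sq])
  have sub: "{transpose (matrix_inv K) *v (\<theta> *\<^sub>R sgnvec s + \<phi> *\<^sub>R sgnvec r
                 + (2 * pi) *\<^sub>R (\<chi> j. real_of_int (n j))) | \<theta> \<phi>. True}
              \<subseteq> {x. psi a b K (stack \<sigma> v) x = lam}" for n :: "'d \<Rightarrow> int"
    using on_level[OF basis Qrep unit eig, of s r] H by blast
  show "(\<forall>n :: 'd \<Rightarrow> int.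
            {transpose (matrix_inv K) *v (\<theta> *\<^sub>R sgnvec s + \<phi> *\<^sub>R sgnvec r
                 + (2 * pi) *\<^sub>R (\<chi> j. real_of_int (n j))) | \<theta> \<phi>. True}
              \<subseteq> {x. psi a b K (stack \<sigma> v) x = lam}
          \<and> ((\<forall>c1 c2. c1 *\<^sub>R sgnvec s + c2 *\<^sub>R sgnvec r = 0 \<longrightarrow> c1 = 0 \<and> c2 = 0) \<longrightarrow>
               (let S = {transpose (matrix_inv K) *v (\<theta> *\<^sub>R sgnvec s + \<phi> *\<^sub>R sgnvec r
                          + (2 * pi) *\<^sub>R (\<chi> j. real_of_int (n j))) | \<theta> \<phi>. True}
                in affine S \<and> aff_dim S = 2)))
        \<and> ((\<forall>c1 c2. c1 *\<^sub>R sgnvec s + c2 *\<^sub>R sgnvec r = 0 \<longrightarrow> c1 = 0 \<and> c2 = 0)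
             \<longleftrightarrow> sgnvec (\<lambda>j. s j + r j) \<notin> {vec (-1), vec 1})"
    using sub iff plane[OF Tinj] by blast
qed

end
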